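(* Let $P(x)=3(x/\Upsilon)^2-2(x/\Upsilon)^3$, $Q(x)=1-P(\Upsilon+(1-\Upsilon)x)$, $\vartheta=10^{-10}$, $\Upsilon=0.64$. Then for all real $u\ge10$ and all real $v\ne0$ with $|v|\le5u$, $$\mathscr V(u,v)\le 1+e^{-u/2}.$$
   Context: Put $\kappa:=1-5\vartheta$, $w:=u+iv$, and define (sums over $j$ are finite since $P,Q$ are cubic) $\mathcal P(w):=e^{-2w\kappa}\sum_{j\ge2}\frac{P^{(j)}(0)}{(-2w\kappa)^j}$, $\mathcal Q(w):=e^{-2w\kappa(1-\Upsilon)}\sum_{j\ge2}\frac{Q^{(j)}(0)}{(-2w\kappa(1-\Upsilon))^j}$, $D(x):=\frac{iv}{w}P'(x)+\frac{u}{2w^2\kappa}P''(x)-\frac{u}{4w^3\kappa^2}P'''(x)$, $E(x):=\frac{u}{w}P'(x)+\frac{iv}{2w^2\kappa}P''(x)-\frac{iv}{4w^3\kappa^2}P'''(x)$. Then $\mathscr V(u,v):=\mathscr V_1+\mathscr V_2+\mathscr V_3$ with $\mathscr V_1:=1+\frac{1}{2u\kappa}\int_0^\Upsilon e^{-2u(1-x)\kappa}P'(x)^2dx$; $\mathscr V_2:=e^{-4u}\Big[-\frac{1}{2u\kappa}\int_0^\Upsilon e^{-2u(1-x)\kappa}|D(x)|^2dx+2\Re\Big\{\overline{\mathcal P(w)}\int_0^\Upsilon e^{-2iv(1-x)\kappa}D(x)\,dx\Big\}+\big(e^{2u\kappa(1-\Upsilon)}-e^{2u\kappa}\big)|\mathcal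 P(w)|^2+\big(1-e^{2u\kappa(1-\Upsilon)}\big)|\mathcal P(w)+\mathcal Q(w)|^2\Big]$; $\mathscr V_3:=-2\Re\Big\{e^{-2w}\Big[\frac{1}{-2iv\kappa}\int_0^\Upsilon e^{-2u(1-x)\kappa}\big(-2iv\kappa P(x)+P'(x)\big)E(x)\,dx+\mathcal P(w)\int_0^\Upsilon e^{2iv(1-x)\kappa}\big(-2iv\kappa P(x)+P'(x)\big)dx+\big(1-e^{2iv(1-\Upsilon)\kappa}\big)\big(\mathcal P(w)+\mathcal Q(w)\big)\Big]\Big\}$. *)

theory Defs
  imports "HOL-Analysis.Analysis"
begin

definition Ups :: real where "Ups = 64/100"
definition theta :: real where "theta = 1 / 10^10"
definition kappa :: real where "kappa = 1 - 5 * theta"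

definition Pf :: "real \<Rightarrow> real" where
  "Pf x = 3 * (x / Ups)^2 - 2 * (x / Ups)^3"
definition Qf :: "real \<Rightarrow> real" where
  "Qf x = 1 - Pf (Ups + (1 - Ups) * x)"

definition dP :: "nat \<Rightarrow> real \<Rightarrow> real" where "dP j = (deriv ^^ j) Pf"
definition dQ :: "nat \<Rightarrow> real \<Rightarrow> real" where "dQ j = (deriv ^^ j) Qf"

text \<open>Sums over j >= 2 are finite since P, Q are cubic: j ranges over 2..3.\<close>
definition calP :: "complex \<Rightarrow> complex" where
  "calP w = exp (- 2 * w * kappa) *
     (\<Sum>j\<in>{2..3}. complex_of_real (dP j 0) / (- 2 * w * kappa) ^ j)"
definition calQ :: "complex \<Rightarrow> complex" where
  "calQ w = exp (- 2 * w * kappa * (1 - Ups)) *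
     (\<Sum>j\<in>{2..3}. complex_of_real (dQ j 0) / (- 2 * w * kappa * (1 - Ups)) ^ j)"

definition Dfun :: "real \<Rightarrow> real \<Rightarrow> real \<Rightarrow> complex" where
  "Dfun u v x = (let w = Complex u v in
     \<i> * v / w * dP 1 x + u / (2 * w^2 * kappa) * dP 2 x - u / (4 * w^3 * kappa^2) * dP 3 x)"
definition Efun :: "real \<Rightarrow> real \<Rightarrow> real \<Rightarrow> complex" where
  "Efun u v x = (let w = Complex u v in
     u / w * dP 1 x + \<i> * v / (2 * w^2 * kappa) * dP 2 x - \<i> * v / (4 * w^3 * kappa^2) * dP 3 x)"

definition V1 :: "real \<Rightarrow> real \<Rightarrow> real" where
  "V1 u v = 1 + 1 / (2 * u * kappa) *
     integral {0..Ups} (\<lambda>x. exp (- 2 * u * (1 - x) * kappa) * (dP 1 x)^2)"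

definition V2 :: "real \<Rightarrow> real \<Rightarrow> real" where
  "V2 u v = (let w = Complex u v in exp (- 4 * u) *
     ( - 1 / (2 * u * kappa) *
         integral {0..Ups} (\<lambda>x. exp (- 2 * u * (1 - x) * kappa) * (cmod (Dfun u v x))^2)
       + 2 * Re (cnj (calP w) *
         integral {0..Ups} (\<lambda>x. exp (- 2 * \<i> * v * (1 - x) * kappa) * Dfun u v x))
       + (exp (2 * u * kappa * (1 - Ups)) - exp (2 * u * kappa)) * (cmod (calP w))^2
       + (1 - exp (2 * u * kappa * (1 - Ups))) * (cmod (calP w + calQ w))^2))"

definition V3 :: "real \<Rightarrow> real \<Rightarrow> real" where
  "V3 u v = (let w = Complex u v in - 2 * Re (exp (- 2 * w) *
     ( 1 / (- 2 * \<i> * v * kappa) *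
         integral {0..Ups} (\<lambda>x. complex_of_real (exp (- 2 * u * (1 - x) * kappa)) *
            (- 2 * \<i> * v * kappa * Pf x + dP 1 x) * Efun u v x)
       + calP w * integral {0..Ups} (\<lambda>x. exp (2 * \<i> * v * (1 - x) * kappa) *
            (- 2 * \<i> * v * kappa * Pf x + dP 1 x))
       + (1 - exp (2 * \<i> * v * (1 - Ups) * kappa)) * (calP w + calQ w))))"

definition VV :: "real \<Rightarrow> real \<Rightarrow> real" where
  "VV u v = V1 u v + V2 u v + V3 u v"

end

theory Submission
  imports Defs
begin


definition p1 :: "real \<Rightarrow> real" where "p1 x = 6*x/Ups^2 - 6*x^2/Ups^3"
definition p2 :: "real \<Rightarrow> real" where "p2 x = 6/Ups^2 - 12*x/Ups^3"
definition p3 :: "real \<Rightarrow> real" where "p3 x = - 12/Ups^3"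

lemma Ups_pos: "Ups > 0" by (simp add: Ups_def)

lemma dP1: "dP 1 = p1"
proof -
  have "deriv Pf x = p1 x" for x
  proof (rule DERIV_imp_deriv)
    show "(Pf has_real_derivative p1 x) (at x)"
      unfolding Pf_def[abs_def] p1_def
      using Ups_pos by (auto intro!: derivative_eq_intros simp: field_simps power2_eq_square power3_eq_cube)
  qed
  then show ?thesis by (auto simp: dP_def)
qed

lemma dP2: "dP 2 = p2"
proof -
  have "deriv p1 x = p2 x" for x
  proof (rule DERIV_imp_deriv)
    show "(p1 has_real_derivative p2 x) (at x)"
      unfolding p1_def[abs_def] p2_def
      using Ups_pos by (auto intro!: derivative_eq_intros simp: field_simps power2_eq_square power3_eq_cube)
  qed
  then show ?thesis using dP1 by (auto simp: dP_def numeral_2_eq_2)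
qed

lemma dP3: "dP 3 = p3"
proof -
  have "deriv p2 x = p3 x" for x
  proof (rule DERIV_imp_deriv)
    show "(p2 has_real_derivative p3 x) (at x)"
      unfolding p2_def[abs_def] p3_def
      using Ups_pos by (auto intro!: derivative_eq_intros simp: field_simps power2_eq_square power3_eq_cube)
  qed
  then show ?thesis using dP2 by (auto simp: dP_def numeral_3_eq_3 numeral_2_eq_2)
qed

definition q1 :: "real \<Rightarrow> real" where "q1 x = -(1-Ups) * p1 (Ups + (1-Ups)*x)"
definition q2 :: "real \<Rightarrow> real" where "q2 x = - ((1-Ups)^2) * p2 (Ups + (1-Ups)*x)"

lemma dQ2: "dQ 2 = q2"
proof -
  have a: "deriv Qf x = q1 x" for x
  proof (rule DERIV_imp_deriv)
    show "(Qf has_real_derivative q1 x) (at x)"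
      unfolding Qf_def[abs_def] Pf_def q1_def p1_def
      using Ups_pos by (auto intro!: derivative_eq_intros simp: field_simps power2_eq_square power3_eq_cube)
  qed
  have b: "deriv q1 x = q2 x" for x
  proof (rule DERIV_imp_deriv)
    show "(q1 has_real_derivative q2 x) (at x)"
      unfolding q2_def q1_def[abs_def] p2_def p1_def
      using Ups_pos by (auto intro!: derivative_eq_intros simp: field_simps power2_eq_square power3_eq_cube)
  qed
  have "deriv Qf = q1" using a by auto
  then show ?thesis using b by (auto simp: dQ_def numeral_2_eq_2)
qed

lemma dQ3: "dQ 3 0 = 12*(1-Ups)^3/Ups^3"
proof -
  have b: "deriv q2 x = 12*(1-Ups)^3/Ups^3" for x
  proof (rule DERIV_imp_deriv)
    show "(q2 has_real_derivative 12*(1-Ups)^3/Ups^3) (at x)"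
      unfolding q2_def[abs_def] p2_def
      using Ups_pos by (auto intro!: derivative_eq_intros simp: field_simps power2_eq_square power3_eq_cube)
  qed
  have "dQ 3 = deriv (dQ 2)" by (simp add: dQ_def numeral_3_eq_3 numeral_2_eq_2)
  then show ?thesis using b dQ2 by simp
qed

lemma bounds_P:
  assumes "0 \<le> x" "x \<le> Ups"
  shows "0 \<le> Pf x" "Pf x \<le> 1" "0 \<le> p1 x" "p1 x \<le> 75/32" "\<bar>p2 x\<bar> \<le> 15" "\<bar>p3 x\<bar> \<le> 46"
proof -
  define t where "t = x / Ups"
  have t: "0 \<le> t" "t \<le> 1" using assms Ups_pos by (auto simp: t_def field_simps)
  have Pt: "Pf x = 3*t^2 - 2*t^3" by (simp add: Pf_def t_def)
  have p1t: "p1 x = (6/Ups) * (t - t^2)" using Ups_pos by (simp add: p1_def t_def field_simps power2_eq_square power3_eq_cube)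
  have p2t: "p2 x = (6/Ups^2) * (1 - 2*t)" using Ups_pos by (simp add: p2_def t_def field_simps power2_eq_square power3_eq_cube)
  have e1: "Pf x = t*t*(3-2*t)" unfolding Pt by (simp add: power2_eq_square power3_eq_cube algebra_simps)
  have "t*t*(3-2*t) \<ge> 0" using t by (intro mult_nonneg_nonneg) auto
  then show "0 \<le> Pf x" using e1 by simp
  have e2: "1 - Pf x = (1-t)*(1-t)*(1+2*t)" unfolding Pt by (simp add: power2_eq_square power3_eq_cube algebra_simps)
  have "(1-t)*(1-t)*(1+2*t) \<ge> 0" using t by (intro mult_nonneg_nonneg) auto
  then show "Pf x \<le> 1" using e2 by simp
  have e3: "t - t^2 = t*(1-t)" by (simp add: power2_eq_square algebra_simps)
  have "t*(1-t) \<ge> 0" using t by (intro mult_nonneg_nonneg) auto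
  then show "0 \<le> p1 x" unfolding p1t using Ups_pos e3 by simp
  have "1/4 - (t - t^2) = (t - 1/2)^2" by (simp add: power2_eq_square algebra_simps)
  then have "t - t^2 \<le> 1/4" by (metis diff_ge_0_iff_ge zero_le_power2)
  then show "p1 x \<le> 75/32" unfolding p1t using Ups_pos by (simp add: Ups_def)
  have "\<bar>1 - 2*t\<bar> \<le> 1" using t by auto
  then have "\<bar>p2 x\<bar> \<le> (6/Ups^2)*1" unfolding p2t abs_mult using Ups_pos
    by (simp add: divide_right_mono)
  also have "\<dots> \<le> 15" by (simp add: Ups_def power2_eq_square)
  finally show "\<bar>p2 x\<bar> \<le> 15" .
  show "\<bar>p3 x\<bar> \<le> 46" by (simp add: p3_def Ups_def power3_eq_cube)
qed

lemma int_bound: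
  fixes f :: "real \<Rightarrow> 'a::banach"
  assumes "0 \<le> B" "a \<le> b" "\<And>x. x \<in> {a..b} \<Longrightarrow> norm (f x) \<le> B"
  shows "norm (integral {a..b} f) \<le> B * (b - a)"
proof (cases "f integrable_on {a..b}")
  case True
  then have "(f has_integral integral {a..b} f) (cbox a b)" by (simp add: integrable_integral)
  from has_integral_bound[OF assms(1) this] assms show ?thesis by auto
next
  case False
  then show ?thesis using assms by (simp add: not_integrable_integral)
qed

lemma int_nonneg:
  fixes f :: "real \<Rightarrow> real"
  assumes "\<And>x. x \<in> {a..b} \<Longrightarrow> 0 \<le> f x"
  shows "0 \<le> integral {a..b} f"
proof (cases "f integrable_on {a..b}")
  case True
  then show ?thesis using assms integral_nonneg by blast
next
  case False
  then show ?thesis by (simp add: not_integrable_integral)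
qed

lemma kappa_bounds: "99/100 \<le> kappa" "kappa \<le> 1"
  by (auto simp: kappa_def theta_def)

lemma V1_bound:
  assumes "u \<ge> 10"
  shows "V1 u v \<le> 1 + (1/5) * exp (- u / 2)"
proof -
  have k: "99/100 \<le> kappa" "kappa \<le> 1" by (rule kappa_bounds)+
  define B where "B = exp (- 2 * u * (1 - Ups) * kappa) * (75/32)^2"
  have B0: "0 \<le> B" by (simp add: B_def)
  have pt: "norm (exp (- 2 * u * (1 - x) * kappa) * (dP 1 x)^2) \<le> B" if "x \<in> {0..Ups}" for x
  proof -
    have x: "0 \<le> x" "x \<le> Ups" using that by auto
    have "0 \<le> p1 x" "p1 x \<le> 75/32" using bounds_P[OF x] by auto
    then have "(p1 x)^2 \<le> (75/32)^2" by (intro power_mono) auto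
    moreover have "exp (- 2 * u * (1 - x) * kappa) \<le> exp (- 2 * u * (1 - Ups) * kappa)"
      using x assms k by (auto intro!: mult_right_mono mult_left_mono)
    ultimately show ?thesis unfolding B_def dP1 by (simp add: mult_mono)
  qed
  have "norm (integral {0..Ups} (\<lambda>x. exp (- 2 * u * (1 - x) * kappa) * (dP 1 x)^2)) \<le> B * (Ups - 0)"
    by (rule int_bound[OF B0]) (use Ups_pos pt in auto)
  then have I: "integral {0..Ups} (\<lambda>x. exp (- 2 * u * (1 - x) * kappa) * (dP 1 x)^2) \<le> B * Ups" by simp
  have c0: "0 \<le> 1 / (2 * u * kappa)" using assms k by simp
  have "V1 u v \<le> 1 + 1 / (2 * u * kappa) * (B * Ups)"
    unfolding V1_def using mult_left_mono[OF I c0] by simp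
  also have "1 / (2 * u * kappa) * (B * Ups) \<le> (1/5) * exp (- u / 2)"
  proof -
    have e: "exp (- 2 * u * (1 - Ups) * kappa) \<le> exp (- u / 2)"
      using assms k by (simp add: Ups_def)
    have "1 / (2 * u * kappa) * (B * Ups) = (Ups * (75/32)^2 / (2 * u * kappa)) * exp (- 2 * u * (1 - Ups) * kappa)"
      by (simp add: B_def)
    also have "\<dots> \<le> (1/5) * exp (- u / 2)"
    proof (rule mult_mono[OF _ e])
      have "Ups * (75/32)^2 / (2 * u * kappa) \<le> Ups * (75/32)^2 / (2 * 10 * (99/100))"
        using assms k Ups_pos by (intro divide_left_mono mult_mono) auto
      also have "\<dots> \<le> 1/5" by (simp add: Ups_def power2_eq_square)
      finally show "Ups * (75/32)^2 / (2 * u * kappa) \<le> 1/5" .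
    qed auto
    finally show ?thesis .
  qed
  finally show ?thesis by simp
qed

lemma cal_gen:
  fixes y :: complex and c :: "nat \<Rightarrow> real" and r :: real
  assumes r: "r > 0" "cmod y \<ge> r"
  shows "cmod (exp y * (\<Sum>j\<in>{2..3}. complex_of_real (c j) / y^j))
         \<le> exp (Re y) * (\<bar>c 2\<bar>/r^2 + \<bar>c 3\<bar>/r^3)"
proof -
  have s: "{2..3::nat} = {2,3}" by auto
  have y0: "cmod y > 0" using r by linarith
  have "cmod (\<Sum>j\<in>{2..3}. complex_of_real (c j) / y^j) \<le> \<bar>c 2\<bar>/(cmod y)^2 + \<bar>c 3\<bar>/(cmod y)^3"
    unfolding s using norm_triangle_ineq[of "complex_of_real (c 2) / y^2" "complex_of_real (c 3) / y^3"]
    by (simp add: norm_divide norm_power)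
  also have "\<dots> \<le> \<bar>c 2\<bar>/r^2 + \<bar>c 3\<bar>/r^3"
    using r by (intro add_mono divide_left_mono power_mono mult_pos_pos) auto
  finally have "cmod (\<Sum>j\<in>{2..3}. complex_of_real (c j) / y^j) \<le> \<bar>c 2\<bar>/r^2 + \<bar>c 3\<bar>/r^3" .
  then show ?thesis by (simp add: norm_mult mult_left_mono)
qed

lemma cmod_w: "cmod (Complex u v) \<ge> u" "cmod (Complex u v) \<ge> \<bar>v\<bar>"
  using abs_Re_le_cmod[of "Complex u v"] abs_Im_le_cmod[of "Complex u v"] by auto

lemma calP_bound:
  assumes u: "u \<ge> 10"
  shows "cmod (calP (Complex u v)) \<le> 5 / u^2"
proof -
  have k: "99/100 \<le> kappa" "kappa \<le> 1" by (rule kappa_bounds)+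
  define y where "y = - 2 * Complex u v * kappa"
  define r where "r = 2 * kappa * u"
  have r0: "r > 0" using k u by (simp add: r_def)
  have cy: "cmod y \<ge> r" using cmod_w[where u=u and v=v] k unfolding y_def r_def by (simp add: norm_mult)
  have Re: "Re y = - 2 * u * kappa" by (simp add: y_def)
  have "cmod (calP (Complex u v)) \<le> exp (Re y) * (\<bar>dP 2 0\<bar>/r^2 + \<bar>dP 3 0\<bar>/r^3)"
    unfolding calP_def y_def[symmetric] using cal_gen[OF r0 cy, of "\<lambda>j. dP j 0"] by simp
  also have "\<dots> \<le> 1 * (15/r^2 + 46/r^3)"
  proof (rule mult_mono)
    show "exp (Re y) \<le> 1" using Re u k by simp
    have "\<bar>dP 2 0\<bar> \<le> 15" "\<bar>dP 3 0\<bar> \<le> 46" using bounds_P[of 0] Ups_pos by (auto simp: dP2 dP3)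
    then show "\<bar>dP 2 0\<bar>/r^2 + \<bar>dP 3 0\<bar>/r^3 \<le> 15/r^2 + 46/r^3"
      using r0 by (intro add_mono divide_right_mono) auto
  qed (use r0 in auto)
  also have "\<dots> \<le> 5 / u^2"
  proof -
    have ra: "r \<ge> 198/100 * u" using k u by (simp add: r_def)
    have "15/r^2 + 46/r^3 \<le> 15/(198/100*u)^2 + 46/(198/100*u)^3"
      using ra u by (intro add_mono divide_left_mono power_mono mult_pos_pos) auto
    also have "\<dots> \<le> 5/u^2" using u by (simp add: field_simps power2_eq_square power3_eq_cube)
    finally show ?thesis by simp
  qed
  finally show ?thesis .
qed

lemma calQ_bound:
  assumes u: "u \<ge> 10"
  shows "cmod (calQ (Complex u v)) \<le> 5 / u^2"
proof -
  have k: "99/100 \<le> kappa" "kappa \<le> 1" by (rule kappa_bounds)+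
  define y where "y = - 2 * Complex u v * kappa * (1 - Ups)"
  define r where "r = 2 * kappa * (1 - Ups) * u"
  have r0: "r > 0" using k u by (simp add: r_def Ups_def)
  have cy: "cmod y \<ge> r" using cmod_w[where u=u and v=v] k unfolding y_def r_def
    by (simp add: norm_mult Ups_def)
  have Re: "Re y = - 2 * u * kappa * (1 - Ups)" by (simp add: y_def)
  have "cmod (calQ (Complex u v)) \<le> exp (Re y) * (\<bar>dQ 2 0\<bar>/r^2 + \<bar>dQ 3 0\<bar>/r^3)"
    unfolding calQ_def y_def[symmetric] using cal_gen[OF r0 cy, of "\<lambda>j. dQ j 0"] by simp
  also have "\<dots> \<le> 1 * (2/r^2 + 22/10/r^3)"
  proof (rule mult_mono)
    show "exp (Re y) \<le> 1" using Re u k by (simp add: Ups_def)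
    have "\<bar>dQ 2 0\<bar> \<le> 2" "\<bar>dQ 3 0\<bar> \<le> 22/10"
      by (auto simp: dQ2 dQ3 q2_def p2_def Ups_def power2_eq_square power3_eq_cube)
    then show "\<bar>dQ 2 0\<bar>/r^2 + \<bar>dQ 3 0\<bar>/r^3 \<le> 2/r^2 + 22/10/r^3"
      using r0 by (intro add_mono divide_right_mono) auto
  qed (use r0 in auto)
  also have "\<dots> \<le> 5 / u^2"
  proof -
    have ra: "r \<ge> 7128/10000 * u" using k u by (simp add: r_def Ups_def)
    have "2/r^2 + 22/10/r^3 \<le> 2/(7128/10000*u)^2 + 22/10/(7128/10000*u)^3"
      using ra u by (intro add_mono divide_left_mono power_mono mult_pos_pos) auto
    also have "\<dots> \<le> 5/u^2" using u by (simp add: field_simps power2_eq_square power3_eq_cube)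
    finally show ?thesis by simp
  qed
  finally show ?thesis .
qed

lemma W_facts:
  fixes u v :: real
  assumes u: "u \<ge> 10"
  defines "W \<equiv> cmod (Complex u v)"
  shows "W > 0" "u / W \<le> 1" "\<bar>v\<bar> / W \<le> 1" "u / W^2 \<le> 1/10" "u / W^3 \<le> 1/100"
    "\<bar>v\<bar> / W^2 \<le> 1/10" "\<bar>v\<bar> / W^3 \<le> 1/100" "1 / W \<le> 1/10" "1 / W^2 \<le> 1/100" "1/W^3 \<le> 1/1000"
proof -
  have Wu: "W \<ge> u" "W \<ge> \<bar>v\<bar>" using cmod_w[where u=u and v=v] by (auto simp: W_def)
  show W0: "W > 0" using Wu u by linarith
  show "u / W \<le> 1" "\<bar>v\<bar> / W \<le> 1" using Wu W0 by auto
  have a: "1 / W \<le> 1/10" using Wu u W0 by (simp add: field_simps)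
  show "1 / W \<le> 1/10" by (fact a)
  have b: "1 / W^2 \<le> 1/100"
  proof -
    have "1/W^2 = (1/W)*(1/W)" by (simp add: power2_eq_square)
    also have "\<dots> \<le> (1/10)*(1/10)" using a W0 by (intro mult_mono) auto
    finally show ?thesis by simp
  qed
  show "1 / W^2 \<le> 1/100" by (fact b)
  have c: "1 / W^3 \<le> 1/1000"
  proof -
    have "1/W^3 = (1/W^2)*(1/W)" by (simp add: power3_eq_cube power2_eq_square)
    also have "\<dots> \<le> (1/100)*(1/10)" using a b W0 by (intro mult_mono) auto
    finally show ?thesis by simp
  qed
  show "1/W^3 \<le> 1/1000" by (fact c)
  have "u / W^2 = (u/W) * (1/W)" "\<bar>v\<bar> / W^2 = (\<bar>v\<bar>/W) * (1/W)" by (simp_all add: power2_eq_square)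
  moreover have "u / W^3 = (u/W) * (1/W^2)" "\<bar>v\<bar> / W^3 = (\<bar>v\<bar>/W) * (1/W^2)" by (simp_all add: power3_eq_cube power2_eq_square)
  moreover have "u/W \<le> 1" "\<bar>v\<bar>/W \<le> 1" "u/W \<ge> 0" using Wu W0 u by auto
  ultimately show "u / W^2 \<le> 1/10" "u / W^3 \<le> 1/100" "\<bar>v\<bar> / W^2 \<le> 1/10" "\<bar>v\<bar> / W^3 \<le> 1/100"
    using a b W0 by (auto intro!: mult_mono simp del: divide_le_eq_1)
qed

lemma D_bound:
  assumes u: "u \<ge> 10" and x: "0 \<le> x" "x \<le> Ups"
  shows "cmod (Dfun u v x) \<le> 4"
proof -
  have k: "99/100 \<le> kappa" "kappa \<le> 1" by (rule kappa_bounds)+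
  define W where "W = cmod (Complex u v)"
  note Wf = W_facts[OF u, of v, folded W_def]
  note b = bounds_P[OF x]
  have t1: "cmod (\<i> * v / Complex u v * p1 x) \<le> 1 * (75/32)"
  proof -
    have "cmod (\<i> * v / Complex u v * p1 x) = (\<bar>v\<bar>/W) * \<bar>p1 x\<bar>"
      by (simp add: norm_mult norm_divide W_def)
    also have "\<dots> \<le> 1 * (75/32)" using Wf b by (intro mult_mono) auto
    finally show ?thesis .
  qed
  have t2: "cmod (u / (2 * (Complex u v)^2 * kappa) * p2 x) \<le> (1/10) * 15 / (2 * (99/100))"
  proof -
    have "cmod (u / (2 * (Complex u v)^2 * kappa) * p2 x) = (u/W^2) * \<bar>p2 x\<bar> / (2 * kappa)"
      using u k by (simp add: norm_mult norm_divide norm_power W_def)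
    also have "\<dots> \<le> (1/10) * 15 / (2 * (99/100))"
    proof (rule divide_mono)
      show "(u/W^2) * \<bar>p2 x\<bar> \<le> (1/10) * 15" using Wf(4) b(5) u Wf(1) by (intro mult_mono) auto
      show "0 \<le> (u/W^2) * \<bar>p2 x\<bar>" using u Wf(1) by auto
    qed (use k in auto)
    finally show ?thesis .
  qed
  have t3: "cmod (u / (4 * (Complex u v)^3 * kappa^2) * p3 x) \<le> (1/100) * 46 / (4 * (99/100)^2)"
  proof -
    have "cmod (u / (4 * (Complex u v)^3 * kappa^2) * p3 x) = (u/W^3) * \<bar>p3 x\<bar> / (4 * kappa^2)"
      using u k by (simp add: norm_mult norm_divide norm_power W_def)
    also have "\<dots> \<le> (1/100) * 46 / (4 * (99/100)^2)"
    proof (rule divide_mono)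
      show "(u/W^3) * \<bar>p3 x\<bar> \<le> (1/100) * 46" using Wf(5) b(6) u Wf(1) by (intro mult_mono) auto
      show "0 \<le> (u/W^3) * \<bar>p3 x\<bar>" using u Wf(1) by auto
      show "4 * (99/100)^2 \<le> 4 * kappa^2" using k by (intro mult_left_mono power_mono) auto
    qed (use k in auto)
    finally show ?thesis .
  qed
  have "cmod (Dfun u v x) \<le> cmod (\<i> * v / Complex u v * p1 x) + cmod (u / (2 * (Complex u v)^2 * kappa) * p2 x)
      + cmod (u / (4 * (Complex u v)^3 * kappa^2) * p3 x)"
    unfolding Dfun_def Let_def dP1 dP2 dP3
    by (rule order_trans[OF norm_triangle_ineq4 add_right_mono[OF norm_triangle_ineq]])
  also have "\<dots> \<le> 4" using t1 t2 t3 by (simp add: power2_eq_square)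
  finally show ?thesis .
qed

definition Ffun :: "real \<Rightarrow> real \<Rightarrow> real \<Rightarrow> complex" where
  "Ffun u v x = (let w = Complex u v in
     - (p1 x / w) + p2 x / (2 * w^2 * kappa) - p3 x / (4 * w^3 * kappa^2))"

lemma E_eq:
  assumes u: "u \<ge> 10"
  shows "Efun u v x = p1 x + \<i> * v * Ffun u v x"
proof -
  define w where "w = Complex u v"
  have w0: "w \<noteq> 0" using u by (auto simp: w_def complex_eq_iff)
  have uw0: "complex_of_real u = w - \<i> * v" by (simp add: w_def complex_eq_iff)
  have uw: "complex_of_real u / w = 1 - \<i> * v / w"
    unfolding uw0 using w0 by (simp add: diff_divide_distrib)
  show ?thesis unfolding Efun_def Ffun_def Let_def w_def[symmetric] dP1 dP2 dP3 uw
    by (simp add: algebra_simps)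
qed

lemma F_bound:
  assumes u: "u \<ge> 10" and x: "0 \<le> x" "x \<le> Ups"
  shows "cmod (Ffun u v x) \<le> 1/3"
proof -
  have k: "99/100 \<le> kappa" "kappa \<le> 1" by (rule kappa_bounds)+
  define W where "W = cmod (Complex u v)"
  note Wf = W_facts[OF u, of v, folded W_def]
  note b = bounds_P[OF x]
  have t1: "cmod (p1 x / Complex u v) \<le> (75/32) * (1/10)"
  proof -
    have "cmod (p1 x / Complex u v) = \<bar>p1 x\<bar> * (1/W)"
      by (simp add: norm_mult norm_divide W_def)
    also have "\<dots> \<le> (75/32) * (1/10)" using Wf b by (intro mult_mono) auto
    finally show ?thesis .
  qed
  have t2: "cmod (p2 x / (2 * (Complex u v)^2 * kappa)) \<le> 15 * (1/100) / (2 * (99/100))"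
  proof -
    have "cmod (p2 x / (2 * (Complex u v)^2 * kappa)) = \<bar>p2 x\<bar> * (1/W^2) / (2 * kappa)"
      using u k by (simp add: norm_mult norm_divide norm_power W_def)
    also have "\<dots> \<le> 15 * (1/100) / (2 * (99/100))"
    proof (rule divide_mono)
      show "\<bar>p2 x\<bar> * (1/W^2) \<le> 15 * (1/100)" using Wf(9) b(5) Wf(1) by (intro mult_mono) auto
      show "0 \<le> \<bar>p2 x\<bar> * (1/W^2)" using Wf(1) by auto
    qed (use k in auto)
    finally show ?thesis .
  qed
  have t3: "cmod (p3 x / (4 * (Complex u v)^3 * kappa^2)) \<le> 46 * (1/1000) / (4 * (99/100)^2)"
  proof -
    have "cmod (p3 x / (4 * (Complex u v)^3 * kappa^2)) = \<bar>p3 x\<bar> * (1/W^3) / (4 * kappa^2)"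
      using u k by (simp add: norm_mult norm_divide norm_power W_def)
    also have "\<dots> \<le> 46 * (1/1000) / (4 * (99/100)^2)"
    proof (rule divide_mono)
      show "\<bar>p3 x\<bar> * (1/W^3) \<le> 46 * (1/1000)" using Wf(10) b(6) Wf(1) by (intro mult_mono) auto
      show "0 \<le> \<bar>p3 x\<bar> * (1/W^3)" using Wf(1) by auto
      show "4 * (99/100)^2 \<le> 4 * kappa^2" using k by (intro mult_left_mono power_mono) auto
    qed (use k in auto)
    finally show ?thesis .
  qed
  have "cmod (Ffun u v x) \<le> cmod (- (p1 x / Complex u v)) + cmod (p2 x / (2 * (Complex u v)^2 * kappa))
      + cmod (p3 x / (4 * (Complex u v)^3 * kappa^2))"
    unfolding Ffun_def Let_def
    by (rule order_trans[OF norm_triangle_ineq4 add_right_mono[OF norm_triangle_ineq]])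
  also have "\<dots> \<le> 1/3" using t1 t2 t3 by (simp add: power2_eq_square)
  finally show ?thesis .
qed

lemma E_bound:
  assumes u: "u \<ge> 10" and x: "0 \<le> x" "x \<le> Ups"
  shows "cmod (Efun u v x) \<le> 4"
proof -
  have k: "99/100 \<le> kappa" "kappa \<le> 1" by (rule kappa_bounds)+
  define W where "W = cmod (Complex u v)"
  note Wf = W_facts[OF u, of v, folded W_def]
  note b = bounds_P[OF x]
  have t1: "cmod (u / Complex u v * p1 x) \<le> 1 * (75/32)"
  proof -
    have "cmod (u / Complex u v * p1 x) = (u/W) * \<bar>p1 x\<bar>"
      using u by (simp add: norm_mult norm_divide W_def)
    also have "\<dots> \<le> 1 * (75/32)" using Wf b u by (intro mult_mono) auto
    finally show ?thesis .
  qed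
  have t2: "cmod (\<i> * v / (2 * (Complex u v)^2 * kappa) * p2 x) \<le> (1/10) * 15 / (2 * (99/100))"
  proof -
    have "cmod (\<i> * v / (2 * (Complex u v)^2 * kappa) * p2 x) = (\<bar>v\<bar>/W^2) * \<bar>p2 x\<bar> / (2 * kappa)"
      using u k by (simp add: norm_mult norm_divide norm_power W_def)
    also have "\<dots> \<le> (1/10) * 15 / (2 * (99/100))"
    proof (rule divide_mono)
      show "(\<bar>v\<bar>/W^2) * \<bar>p2 x\<bar> \<le> (1/10) * 15" using Wf(6) b(5) Wf(1) by (intro mult_mono) auto
      show "0 \<le> (\<bar>v\<bar>/W^2) * \<bar>p2 x\<bar>" using Wf(1) by auto
    qed (use k in auto)
    finally show ?thesis .
  qed
  have t3: "cmod (\<i> * v / (4 * (Complex u v)^3 * kappa^2) * p3 x) \<le> (1/100) * 46 / (4 * (99/100)^2)"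
  proof -
    have "cmod (\<i> * v / (4 * (Complex u v)^3 * kappa^2) * p3 x) = (\<bar>v\<bar>/W^3) * \<bar>p3 x\<bar> / (4 * kappa^2)"
      using u k by (simp add: norm_mult norm_divide norm_power W_def)
    also have "\<dots> \<le> (1/100) * 46 / (4 * (99/100)^2)"
    proof (rule divide_mono)
      show "(\<bar>v\<bar>/W^3) * \<bar>p3 x\<bar> \<le> (1/100) * 46" using Wf(7) b(6) Wf(1) by (intro mult_mono) auto
      show "0 \<le> (\<bar>v\<bar>/W^3) * \<bar>p3 x\<bar>" using Wf(1) by auto
      show "4 * (99/100)^2 \<le> 4 * kappa^2" using k by (intro mult_left_mono power_mono) auto
    qed (use k in auto)
    finally show ?thesis .
  qed
  have "cmod (Efun u v x) \<le> cmod (u / Complex u v * p1 x) + cmod (\<i> * v / (2 * (Complex u v)^2 * kappa) * p2 x)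
      + cmod (\<i> * v / (4 * (Complex u v)^3 * kappa^2) * p3 x)"
    unfolding Efun_def Let_def dP1 dP2 dP3
    by (rule order_trans[OF norm_triangle_ineq4 add_right_mono[OF norm_triangle_ineq]])
  also have "\<dots> \<le> 4" using t1 t2 t3 by (simp add: power2_eq_square)
  finally show ?thesis .
qed

lemma Re_eq:
  assumes "v \<noteq> 0" "kappa \<noteq> 0"
  shows "Re (exp (- 2 * Complex u v) * (1 / (- 2 * \<i> * v * kappa) * complex_of_real R))
     = exp (- 2 * u) * sin (2 * v) * R / (2 * v * kappa)"
proof -
  have c: "1 / (- 2 * \<i> * v * kappa) = \<i> * complex_of_real (1 / (2 * v * kappa))"
  proof -
    have a0: "(- 2 * \<i> * v * kappa) \<noteq> 0" using assms by simp
    have p: "(\<i> * complex_of_real (1 / (2 * v * kappa))) * (- 2 * \<i> * v * kappa) = 1"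
    proof -
      have "(\<i> * complex_of_real (1 / (2 * v * kappa))) * (- 2 * \<i> * v * kappa)
          = (\<i> * \<i>) * (- complex_of_real ((2 * v * kappa) / (2 * v * kappa)))"
        by (simp add: algebra_simps)
      also have "\<dots> = 1" using assms by simp
      finally show ?thesis .
    qed
    show ?thesis by (subst nonzero_divide_eq_eq[OF a0]) (rule p[symmetric])
  qed
  have "exp (- 2 * Complex u v) * (1 / (- 2 * \<i> * v * kappa) * complex_of_real R)
     = (exp (- 2 * Complex u v) * \<i>) * complex_of_real (R / (2 * v * kappa))"
    unfolding c by (simp add: algebra_simps)
  moreover have "Re (exp (- 2 * Complex u v) * \<i>) = exp (- 2 * u) * sin (2 * v)"
    by (simp add: Im_exp)
  ultimately show ?thesis by simp
qed

lemma V2_bound: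
  assumes u: "u \<ge> 10"
  shows "V2 u v \<le> exp (- 4 * u)"
proof -
  have k: "99/100 \<le> kappa" "kappa \<le> 1" by (rule kappa_bounds)+
  define w where "w = Complex u v"
  define X1 where "X1 = integral {0..Ups} (\<lambda>x. exp (- 2 * u * (1 - x) * kappa) * (cmod (Dfun u v x))^2)"
  define I2 where "I2 = integral {0..Ups} (\<lambda>x. exp (- 2 * \<i> * v * (1 - x) * kappa) * Dfun u v x)"
  have X1: "0 \<le> X1" unfolding X1_def by (rule int_nonneg) auto
  have I2: "cmod I2 \<le> 4 * (Ups - 0)" unfolding I2_def
  proof (rule int_bound)
    fix x assume x: "x \<in> {0..Ups}"
    have "cmod (exp (- 2 * \<i> * v * (1 - x) * kappa)) = 1" by (simp add: norm_exp_eq_Re)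
    then show "cmod (exp (- 2 * \<i> * v * (1 - x) * kappa) * Dfun u v x) \<le> 4"
      using D_bound[OF u, of x v] x by (simp add: norm_mult)
  qed (use Ups_pos in auto)
  have P: "cmod (calP w) \<le> 5 / u^2" unfolding w_def by (rule calP_bound[OF u])
  have a1: "- 1 / (2 * u * kappa) * X1 \<le> 0" using X1 u k
    by (simp add: divide_nonneg_pos mult_nonneg_nonneg mult_nonpos_nonneg)
  have a2: "(exp (2 * u * kappa * (1 - Ups)) - exp (2 * u * kappa)) * (cmod (calP w))^2 \<le> 0"
    using u k by (intro mult_nonpos_nonneg) (auto simp: Ups_def)
  have a3: "(1 - exp (2 * u * kappa * (1 - Ups))) * (cmod (calP w + calQ w))^2 \<le> 0"
    using u k by (intro mult_nonpos_nonneg) (auto simp: Ups_def)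
  have a4: "2 * Re (cnj (calP w) * I2) \<le> 2 * ((5 / u^2) * (4 * Ups))"
  proof -
    have "Re (cnj (calP w) * I2) \<le> cmod (cnj (calP w) * I2)" by (rule complex_Re_le_cmod)
    also have "\<dots> = cmod (calP w) * cmod I2" by (simp add: norm_mult)
    also have "\<dots> \<le> (5 / u^2) * (4 * Ups)" using P I2 by (intro mult_mono) auto
    finally show ?thesis by simp
  qed
  have a5: "2 * ((5 / u^2) * (4 * Ups)) \<le> 1"
  proof -
    have "5 / u^2 \<le> 5 / 10^2" using u by (intro divide_left_mono power_mono) auto
    then show ?thesis by (simp add: Ups_def)
  qed
  have "V2 u v = exp (- 4 * u) * (- 1 / (2 * u * kappa) * X1 + 2 * Re (cnj (calP w) * I2)
       + (exp (2 * u * kappa * (1 - Ups)) - exp (2 * u * kappa)) * (cmod (calP w))^2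
       + (1 - exp (2 * u * kappa * (1 - Ups))) * (cmod (calP w + calQ w))^2)"
    unfolding V2_def Let_def w_def[symmetric] X1_def I2_def by simp
  also have "\<dots> \<le> exp (- 4 * u) * 1"
    using a1 a2 a3 a4 a5 by (intro mult_left_mono) auto
  finally show ?thesis by simp
qed



lemma cont_p: "continuous_on A p1" "continuous_on A p2" "continuous_on A p3" "continuous_on A Pf"
  unfolding p1_def[abs_def] p2_def[abs_def] p3_def[abs_def] Pf_def[abs_def]
  by (intro continuous_intros; simp add: Ups_def)+

lemma cont_E: "continuous_on A (\<lambda>x. Efun u v x)"
  unfolding Efun_def Let_def dP1 dP2 dP3
  by (intro continuous_on_add continuous_on_diff continuous_on_mult_left continuous_on_of_real cont_p)

lemma cont_F: "continuous_on A (\<lambda>x. Ffun u v x)"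
  unfolding Ffun_def Let_def divide_inverse
  by (intro continuous_on_add continuous_on_diff continuous_on_minus continuous_on_mult_right continuous_on_of_real cont_p)


lemma V3_bound:
  assumes u: "u \<ge> 10" and v: "v \<noteq> 0" "\<bar>v\<bar> \<le> 5 * u"
  shows "V3 u v \<le> 25 * exp (- 2 * u)"
proof -
  have k: "99/100 \<le> kappa" "kappa \<le> 1" by (rule kappa_bounds)+
  have k0: "kappa \<noteq> 0" using k by auto
  define w where "w = Complex u v"
  define g where "g x = exp (- 2 * u * (1 - x) * kappa)" for x
  define c where "c = 1 / (- 2 * \<i> * v * kappa)"
  define h where "h x = complex_of_real (exp (- 2 * u * (1 - x) * kappa)) *
            (- 2 * \<i> * v * kappa * Pf x + dP 1 x) * Efun u v x" for x
  define f12 where "f12 x = complex_of_real (g x) * Pf x * Efun u v x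
      + complex_of_real (g x) * p1 x * Ffun u v x / (- 2 * complex_of_real kappa)" for x
  define G where "G x = g x * (p1 x)^2" for x
  define J where "J = integral {0..Ups} f12"
  define R where "R = integral {0..Ups} G"
  define I3 where "I3 = integral {0..Ups} (\<lambda>x. exp (2 * \<i> * v * (1 - x) * kappa) *
            (- 2 * \<i> * v * kappa * Pf x + dP 1 x))"
  have pw: "c * h x = f12 x + c * complex_of_real (G x)" for x
  proof -
    have cv: "c * (- 2 * \<i> * v * kappa) = 1" using v k0 by (simp add: c_def)
    have cv2: "c * (\<i> * v) = 1 / (- 2 * complex_of_real kappa)" using v k0 by (simp add: c_def field_simps)
    have "c * h x = complex_of_real (g x) * (c * (- 2 * \<i> * v * kappa)) * Pf x * Efun u v x
        + complex_of_real (g x) * p1 x * (c * p1 x + (c * (\<i> * v)) * Ffun u v x)"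
      unfolding h_def g_def E_eq[OF u, of v x] dP1 by (simp add: algebra_simps)
    also have "\<dots> = f12 x + c * complex_of_real (G x)"
      unfolding cv cv2 f12_def G_def by (simp add: algebra_simps power2_eq_square)
    finally show ?thesis .
  qed
  have cf12: "continuous_on {0..Ups} f12"
    unfolding f12_def[abs_def] g_def divide_inverse
    by (intro continuous_on_add continuous_on_mult continuous_on_of_real continuous_on_exp
      continuous_on_const continuous_on_id continuous_on_diff cont_p cont_E cont_F)
  have cG: "continuous_on {0..Ups} G"
    unfolding G_def[abs_def] g_def
    by (intro continuous_on_add continuous_on_mult continuous_on_power continuous_on_exp
      continuous_on_const continuous_on_id continuous_on_diff cont_p)
  have intf: "f12 integrable_on {0..Ups}" by (rule integrable_continuous_interval[OF cf12])
  have intG: "G integrable_on {0..Ups}" by (rule integrable_continuous_interval[OF cG])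
  have intG': "(\<lambda>x. c * complex_of_real (G x)) integrable_on {0..Ups}"
    using has_integral_of_real[OF integrable_integral[OF intG]]
    by (intro integrable_on_mult_right) (auto simp: integrable_on_def)
  have RG: "integral {0..Ups} (\<lambda>x. complex_of_real (G x)) = complex_of_real R"
    unfolding R_def using has_integral_of_real[OF integrable_integral[OF intG]]
    by (rule integral_unique)
  have T1: "c * integral {0..Ups} h = J + c * complex_of_real R"
  proof -
    have "c * integral {0..Ups} h = integral {0..Ups} (\<lambda>x. c * h x)" by simp
    also have "\<dots> = integral {0..Ups} (\<lambda>x. f12 x + c * complex_of_real (G x))" by (simp add: pw)
    also have "\<dots> = J + integral {0..Ups} (\<lambda>x. c * complex_of_real (G x))"
      unfolding J_def by (rule integral_add[OF intf intG'])
    also have "\<dots> = J + c * complex_of_real R" using RG by simp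
    finally show ?thesis .
  qed
  have g1: "0 \<le> g x" "g x \<le> 1" if "x \<in> {0..Ups}" for x
    using that k u by (auto simp: g_def Ups_def mult_nonneg_nonneg)
  have J: "cmod J \<le> 3"
  proof -
    have "cmod J \<le> (9/2) * (Ups - 0)" unfolding J_def
    proof (rule int_bound)
      fix x assume x: "x \<in> {0..Ups}"
      have x': "0 \<le> x" "x \<le> Ups" using x by auto
      note b = bounds_P[OF x']
      have e1: "cmod (complex_of_real (g x) * Pf x * Efun u v x) \<le> 1 * 1 * 4"
        unfolding norm_mult using g1[OF x] b E_bound[OF u x'] by (intro mult_mono) auto
      have e2: "cmod (complex_of_real (g x) * p1 x * Ffun u v x / (- 2 * complex_of_real kappa))
          \<le> 1 * (75/32) * (1/3) / (2 * (99/100))"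
      proof -
        have "cmod (complex_of_real (g x) * p1 x * Ffun u v x / (- 2 * complex_of_real kappa))
            = \<bar>g x\<bar> * \<bar>p1 x\<bar> * cmod (Ffun u v x) / (2 * kappa)"
          using k by (simp add: norm_mult norm_divide)
        also have "\<dots> \<le> 1 * (75/32) * (1/3) / (2 * (99/100))"
        proof (rule divide_mono)
          show "\<bar>g x\<bar> * \<bar>p1 x\<bar> * cmod (Ffun u v x) \<le> 1 * (75/32) * (1/3)"
            using g1[OF x] b F_bound[OF u x'] by (intro mult_mono) auto
        qed (use k in auto)
        finally show ?thesis .
      qed
      have numc: "1 * (75/32) * (1/3) / (2 * (99/100)) \<le> (1/2::real)" by simp
      have "cmod (f12 x) \<le> 1 * 1 * 4 + 1 * (75/32) * (1/3) / (2 * (99/100))"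
        unfolding f12_def by (rule order_trans[OF norm_triangle_ineq add_mono[OF e1 e2]])
      then show "cmod (f12 x) \<le> 9/2" by simp
    qed (use Ups_pos in auto)
    then show ?thesis by (simp add: Ups_def)
  qed
  have R: "0 \<le> R" "R \<le> 4 * kappa"
  proof -
    show "0 \<le> R" unfolding R_def G_def using g1 by (intro int_nonneg) auto
    have "norm R \<le> (75/32)^2 * (Ups - 0)" unfolding R_def
    proof (rule int_bound)
      fix x assume x: "x \<in> {0..Ups}"
      have x': "0 \<le> x" "x \<le> Ups" using x by auto
      note b = bounds_P[OF x']
      have "(p1 x)^2 \<le> (75/32)^2" using b by (intro power_mono) auto
      then show "norm (G x) \<le> (75/32)^2" unfolding G_def using g1[OF x]
        by (simp add: abs_mult) (metis mult_le_cancel_right1 order_trans zero_le_power2 mult_right_mono mult_left_le_one_le)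
    qed (use Ups_pos in auto)
    then show "R \<le> 4 * kappa" using k by (simp add: Ups_def power2_eq_square)
  qed
  have I3: "cmod I3 \<le> (10 * u + 75/32) * (Ups - 0)" unfolding I3_def
  proof (rule int_bound)
    fix x assume x: "x \<in> {0..Ups}"
    have x': "0 \<le> x" "x \<le> Ups" using x by auto
    note b = bounds_P[OF x']
    have n1: "cmod (exp (2 * \<i> * v * (1 - x) * kappa)) = 1" by (simp add: norm_exp_eq_Re)
    have "cmod (- 2 * \<i> * v * kappa * Pf x + dP 1 x) \<le> cmod (- 2 * \<i> * v * kappa * Pf x) + cmod (complex_of_real (dP 1 x))"
      by (rule norm_triangle_ineq)
    also have "\<dots> = 2 * \<bar>v\<bar> * kappa * \<bar>Pf x\<bar> + \<bar>p1 x\<bar>" using k unfolding dP1 by (simp add: norm_mult)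
    also have "\<dots> \<le> 2 * (5 * u) * 1 * 1 + 75/32"
      using b k v by (intro add_mono mult_mono) auto
    finally show "cmod (exp (2 * \<i> * v * (1 - x) * kappa) * (- 2 * \<i> * v * kappa * Pf x + dP 1 x)) \<le> 10 * u + 75/32"
      by (simp add: norm_mult n1)
  qed (use u Ups_pos in auto)
  have P: "cmod (calP w) \<le> 5 / u^2" unfolding w_def by (rule calP_bound[OF u])
  have Q: "cmod (calQ w) \<le> 5 / u^2" unfolding w_def by (rule calQ_bound[OF u])
  have T2: "cmod (calP w * I3) \<le> 4"
  proof -
    have "cmod (calP w * I3) \<le> (5 / u^2) * ((10 * u + 75/32) * Ups)"
      unfolding norm_mult using P I3 by (intro mult_mono) auto
    also have "\<dots> \<le> 4"
    proof -
      have uu: "u * (u * 3200) \<ge> 10 * (u * 3200)" using u by (intro mult_right_mono) auto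
      show ?thesis using u by (simp add: Ups_def field_simps power2_eq_square) (use uu in linarith)
    qed
    finally show ?thesis .
  qed
  have T3: "cmod ((1 - exp (2 * \<i> * v * (1 - Ups) * kappa)) * (calP w + calQ w)) \<le> 1"
  proof -
    have a: "cmod (1 - exp (2 * \<i> * v * (1 - Ups) * kappa)) \<le> 2"
      using norm_triangle_ineq4[of 1 "exp (2 * \<i> * v * (1 - Ups) * kappa)"] by (simp add: norm_exp_eq_Re)
    have b: "cmod (calP w + calQ w) \<le> 10 / u^2" using P Q norm_triangle_ineq[of "calP w" "calQ w"] by simp
    have "cmod ((1 - exp (2 * \<i> * v * (1 - Ups) * kappa)) * (calP w + calQ w)) \<le> 2 * (10 / u^2)"
      unfolding norm_mult using a b by (intro mult_mono) auto
    also have "\<dots> \<le> 1"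
    proof -
      have uu2: "u * u \<ge> 10 * 10" using u by (intro mult_mono) auto
      show ?thesis using u by (simp add: field_simps power2_eq_square) (use uu2 in linarith)
    qed
    finally show ?thesis .
  qed
  define S where "S = J + calP w * I3 + (1 - exp (2 * \<i> * v * (1 - Ups) * kappa)) * (calP w + calQ w)"
  have S: "cmod S \<le> 8" unfolding S_def
    using norm_triangle_ineq[of "J + calP w * I3" "(1 - exp (2 * \<i> * v * (1 - Ups) * kappa)) * (calP w + calQ w)"]
      norm_triangle_ineq[of J "calP w * I3"] J T2 T3 by linarith
  have V3eq: "V3 u v = - 2 * Re (exp (- 2 * w) * S) - 2 * Re (exp (- 2 * Complex u v) * (1 / (- 2 * \<i> * v * kappa) * complex_of_real R))"
  proof -
    have "V3 u v = - 2 * Re (exp (- 2 * w) * (c * integral {0..Ups} h + calP w * I3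
        + (1 - exp (2 * \<i> * v * (1 - Ups) * kappa)) * (calP w + calQ w)))"
      unfolding V3_def Let_def w_def[symmetric] c_def I3_def h_def by simp
    also have "\<dots> = - 2 * Re (exp (- 2 * w) * S + exp (- 2 * w) * (c * complex_of_real R))"
      unfolding T1 S_def by (simp add: algebra_simps)
    finally show ?thesis unfolding w_def c_def by simp
  qed
  have A: "- 2 * Re (exp (- 2 * w) * S) \<le> 2 * (exp (- 2 * u) * 8)"
  proof -
    have "- Re (exp (- 2 * w) * S) \<le> cmod (exp (- 2 * w) * S)"
      using abs_Re_le_cmod[of "exp (- 2 * w) * S"] by linarith
    also have "\<dots> = exp (- 2 * u) * cmod S" by (simp add: norm_mult norm_exp_eq_Re w_def)
    also have "\<dots> \<le> exp (- 2 * u) * 8" using S by simp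
    finally show ?thesis by simp
  qed
  have B: "- 2 * Re (exp (- 2 * Complex u v) * (1 / (- 2 * \<i> * v * kappa) * complex_of_real R))
      \<le> 2 * (exp (- 2 * u) * 4)"
  proof -
    have "- 2 * Re (exp (- 2 * Complex u v) * (1 / (- 2 * \<i> * v * kappa) * complex_of_real R))
        = - 2 * (exp (- 2 * u) * sin (2 * v) * R / (2 * v * kappa))"
      using Re_eq[OF v(1) k0] by simp
    also have "\<dots> \<le> 2 * \<bar>exp (- 2 * u) * sin (2 * v) * R / (2 * v * kappa)\<bar>" by linarith
    also have "\<bar>exp (- 2 * u) * sin (2 * v) * R / (2 * v * kappa)\<bar> = exp (- 2 * u) * (\<bar>sin (2 * v)\<bar> / \<bar>2 * v\<bar>) * (R / kappa)"
      using R k by (simp add: abs_mult abs_divide)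
    also have "\<dots> \<le> exp (- 2 * u) * 1 * 4"
    proof (intro mult_mono)
      show "\<bar>sin (2 * v)\<bar> / \<bar>2 * v\<bar> \<le> 1" using v(1) abs_sin_x_le_abs_x[of "2 * v"] by simp
      show "R / kappa \<le> 4" using R k by (simp add: divide_le_eq)
    qed (use R k in auto)
    finally show ?thesis by simp
  qed
  show ?thesis using V3eq A B exp_gt_zero[of "- 2 * u"] by linarith
qed

theorem lemma5p6:
  fixes u v :: real
  assumes "u \<ge> 10" and "v \<noteq> 0" and "\<bar>v\<bar> \<le> 5 * u"
  shows "VV u v \<le> 1 + exp (- u / 2)"
proof -
  have b1: "V1 u v \<le> 1 + (1/5) * exp (- u / 2)" by (rule V1_bound[OF assms(1)])
  have b2: "V2 u v \<le> exp (- 4 * u)" by (rule V2_bound[OF assms(1)])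
  have b3: "V3 u v \<le> 25 * exp (- 2 * u)" by (rule V3_bound[OF assms])
  have e1: "exp (- 4 * u) \<le> exp (- 2 * u)" using assms(1) by simp
  have big: "exp (3/2 * u) \<ge> 33"
  proof -
    have eq: "exp (3/2 * u) = exp (3/4 * u) ^ 2"
    proof -
      have "exp (3/4 * u) ^ 2 = exp (3/4 * u + 3/4 * u)" unfolding power2_eq_square exp_add ..
      moreover have "3/4 * u + 3/4 * u = 3/2 * u" by simp
      ultimately show ?thesis by simp
    qed
    have a: "17/2 \<le> exp (3/4 * u)" using exp_ge_add_one_self[of "3/4 * u"] assms(1) by linarith
    have "(17/2)^2 \<le> exp (3/4 * u) ^ 2" using a by (intro power_mono) auto
    then have "exp (3/2 * u) \<ge> (17/2)^2" using eq by simp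
    then show ?thesis by (simp add: power2_eq_square)
  qed
  have e2: "exp (- 2 * u) = exp (- u / 2) / exp (3/2 * u)"
    by (simp add: exp_diff[symmetric])
  have e3: "26 * exp (- 2 * u) \<le> (4/5) * exp (- u / 2)"
  proof -
    have "26 * exp (- 2 * u) = exp (- u / 2) * (26 / exp (3/2 * u))" unfolding e2 by simp
    also have "\<dots> \<le> exp (- u / 2) * (4/5)"
      using big by (intro mult_left_mono) (auto simp: divide_le_eq)
    finally show ?thesis by simp
  qed
  show ?thesis unfolding VV_def using b1 b2 b3 e1 e3 by linarith
qed

end
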